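(* For every $n\ge 2$, $\sigma(P_n\times P_n)\ge n-1$ and $\sigma(T_n)\ge \lfloor (n-1)/2\rfloor$.
   Context: $P_n\times P_n$ is the grid with vertex set $\{1,\dots,n\}^2$, vertices adjacent iff they differ by $1$ in exactly one coordinate. $T_n$ is the graph whose vertices are the points of the planar triangular lattice lying in a closed equilateral triangle of side length $n-1$ with lattice-point corners (each side contains $n$ vertices), two vertices adjacent iff at Euclidean distance $1$. The stretch of a connected graph $G$ is $\sigma(G)=\min_T\max_{uv\in E(G)} d_T(u,v)$, the minimum over spanning trees $T$ of $G$. *)

theory Defs
  imports Main
begin

text \<open>Finite simple graphs are given by a vertex set V and an edge set E of
two-element subsets of V.\<close>

definition walk :: "'a set set \<Rightarrow> 'a list \<Rightarrow> bool" where
  "walk E p \<longleftrightarrow> p \<noteq> [] \<and> (\<forall>i < length p - 1. {p ! i, p ! Suc i} \<in> E)"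

definition connected_graph :: "'a set \<Rightarrow> 'a set set \<Rightarrow> bool" where
  "connected_graph V E \<longleftrightarrow>
     (\<forall>u\<in>V. \<forall>v\<in>V. \<exists>p. walk E p \<and> set p \<subseteq> V \<and> hd p = u \<and> last p = v)"

definition is_cycle :: "'a set set \<Rightarrow> 'a list \<Rightarrow> bool" where
  "is_cycle E p \<longleftrightarrow> length p \<ge> 3 \<and> distinct p \<and> walk E p \<and> {last p, hd p} \<in> E"

definition acyclic_graph :: "'a set set \<Rightarrow> bool" where
  "acyclic_graph E \<longleftrightarrow> \<not> (\<exists>p. is_cycle E p)"

definition spanning_tree :: "'a set \<Rightarrow> 'a set set \<Rightarrow> 'a set set \<Rightarrow> bool" where
  "spanning_tree V E T \<longleftrightarrow> T \<subseteq> E \<and> connected_graph V T \<and> acyclic_graph T"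

definition gdist :: "'a set set \<Rightarrow> 'a \<Rightarrow> 'a \<Rightarrow> nat" where
  "gdist T u v = (LEAST k. \<exists>p. walk T p \<and> hd p = u \<and> last p = v \<and> length p = Suc k)"

definition stretch :: "'a set \<Rightarrow> 'a set set \<Rightarrow> nat" where
  "stretch V E = Min ((\<lambda>T. Max {gdist T u v | u v. {u, v} \<in> E}) ` {T. spanning_tree V E T})"

definition grid_V :: "nat \<Rightarrow> (int \<times> int) set" where
  "grid_V n = {1..int n} \<times> {1..int n}"

definition grid_E :: "nat \<Rightarrow> (int \<times> int) set set" where
  "grid_E n = {{(a, b), (c, d)} | a b c d. (a, b) \<in> grid_V n \<and> (c, d) \<in> grid_V n \<and>
                 \<bar>a - c\<bar> + \<bar>b - d\<bar> = 1}"

text \<open>Triangular grid T_n, in lattice coordinates: (i,j) stands for the point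
  i*(1,0) + j*(1/2, sqrt 3/2); the triangle has corners (0,0), (n-1,0), (0,n-1).
  Two lattice points are at Euclidean distance 1 iff their coordinate difference
  is one of (+-1,0), (0,+-1), (1,-1), (-1,1).\<close>
definition tri_V :: "nat \<Rightarrow> (int \<times> int) set" where
  "tri_V n = {(i, j). 0 \<le> i \<and> 0 \<le> j \<and> i + j \<le> int n - 1}"

definition tri_E :: "nat \<Rightarrow> (int \<times> int) set set" where
  "tri_E n = {{(a, b), (c, d)} | a b c d. (a, b) \<in> tri_V n \<and> (c, d) \<in> tri_V n \<and>
                 (c - a, d - b) \<in> {(1, 0), (-1, 0), (0, 1), (0, -1), (1, -1), (-1, 1)}}"

end

theory Submission
  imports Defs
begin


definition adj :: "'a set set \<Rightarrow> 'a \<Rightarrow> 'a \<Rightarrow> bool" where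
  "adj S u v \<longleftrightarrow> {u, v} \<in> S"

lemma adj_sym: "adj S u v = adj S v u"
  by (simp add: adj_def insert_commute)

lemma adj_rtranclp_sym:
  assumes "(adj S)\<^sup>*\<^sup>* u v" shows "(adj S)\<^sup>*\<^sup>* v u"
  using assms
proof (induction rule: rtranclp_induct)
  case base then show ?case by simp
next
  case (step y z)
  have "adj S z y" using step(2) adj_sym by metis
  then show ?case using step(3) converse_rtranclp_into_rtranclp by metis
qed

lemma rtranclp_dpath:
  assumes "r\<^sup>*\<^sup>* u v"
  shows "\<exists>p. p \<noteq> [] \<and> p!0 = u \<and> p!(length p - 1) = v \<and> distinct p \<and>
             (\<forall>i < length p - 1. r (p!i) (p!Suc i))"
  using assms
proof (induction rule: rtranclp_induct)
  case base show ?case by (intro exI[of _ "[u]"]) auto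
next
  case (step y z)
  then obtain p where p: "p \<noteq> []" "p!0 = u" "p!(length p - 1) = y" "distinct p"
      "\<forall>i<length p - 1. r (p!i) (p!Suc i)" by blast
  show ?case
  proof (cases "z \<in> set p")
    case True
    then obtain k where k: "k < length p" "p!k = z" by (auto simp: in_set_conv_nth)
    let ?q = "take (Suc k) p"
    have "?q \<noteq> [] \<and> ?q!0 = u \<and> ?q!(length ?q - 1) = z \<and> distinct ?q \<and>
             (\<forall>i < length ?q - 1. r (?q!i) (?q!Suc i))"
      using p k by (auto simp: min_def dest: antisym[OF _ Suc_leI[OF k(1)]])
    then show ?thesis by blast
  next
    case False
    let ?q = "p @ [z]"
    have "\<forall>i < length ?q - 1. r (?q!i) (?q!Suc i)"
    proof (intro allI impI)
      fix i assume i: "i < length ?q - 1"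
      show "r (?q!i) (?q!Suc i)"
      proof (cases "i < length p - 1")
        case True then show ?thesis using p(5) by (auto simp add: nth_append)
      next
        case False
        then have "i = length p - 1" using i by simp
        then show ?thesis using p(1,3) step(2) by (simp add: nth_append)
      qed
    qed
    moreover have "?q \<noteq> [] \<and> ?q!0 = u \<and> ?q!(length ?q - 1) = z \<and> distinct ?q"
      using p False by (auto simp: nth_append)
    ultimately show ?thesis by blast
  qed
qed

lemma walk_rtranclp:
  assumes "walk S p" shows "k < length p \<Longrightarrow> (adj S)\<^sup>*\<^sup>* (p!0) (p!k)"
proof (induction k)
  case 0 then show ?case by simp
next
  case (Suc k)
  then have "adj S (p!k) (p!Suc k)" using assms by (auto simp: walk_def adj_def)
  then show ?case using Suc rtranclp.rtrancl_into_rtrancl by (metis Suc_lessD)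
qed

lemma walk_of_rtranclp:
  assumes "(adj S)\<^sup>*\<^sup>* u v"
  shows "\<exists>p. walk S p \<and> hd p = u \<and> last p = v \<and> distinct p \<and> set p \<subseteq> insert u (\<Union>S)"
proof -
  obtain p where p: "p \<noteq> []" "p!0 = u" "p!(length p - 1) = v" "distinct p"
      "\<forall>i<length p - 1. adj S (p!i) (p!Suc i)" using rtranclp_dpath[OF assms] by blast
  have "walk S p" using p(1,5) by (auto simp: walk_def adj_def)
  moreover have "hd p = u" "last p = v" using p by (auto simp: hd_conv_nth last_conv_nth)
  moreover have "set p \<subseteq> insert u (\<Union>S)"
  proof
    fix x assume "x \<in> set p"
    then obtain k where k: "k < length p" "p!k = x" by (auto simp: in_set_conv_nth)
    show "x \<in> insert u (\<Union>S)"
    proof (cases k)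
      case 0 then show ?thesis using k p by simp
    next
      case (Suc j)
      then have "{p!j, p!k} \<in> S" using p(5) k by (auto simp: adj_def)
      then show ?thesis using k by blast
    qed
  qed
  ultimately show ?thesis using p(4) by blast
qed

lemma walk_rt_hd_last:
  assumes "walk S p" shows "(adj S)\<^sup>*\<^sup>* (hd p) (last p)"
proof -
  have "p \<noteq> []" using assms by (simp add: walk_def)
  then show ?thesis using walk_rtranclp[OF assms, of "length p - 1"]
    by (simp add: hd_conv_nth last_conv_nth)
qed

lemma connected_iff_rt:
  assumes "\<Union>S \<subseteq> V"
  shows "connected_graph V S \<longleftrightarrow> (\<forall>u\<in>V. \<forall>v\<in>V. (adj S)\<^sup>*\<^sup>* u v)"
proof
  assume "connected_graph V S"
  then show "\<forall>u\<in>V. \<forall>v\<in>V. (adj S)\<^sup>*\<^sup>* u v"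
    unfolding connected_graph_def using walk_rt_hd_last by metis
next
  assume H: "\<forall>u\<in>V. \<forall>v\<in>V. (adj S)\<^sup>*\<^sup>* u v"
  show "connected_graph V S" unfolding connected_graph_def
  proof (intro ballI)
    fix u v assume uv: "u \<in> V" "v \<in> V"
    then obtain p where "walk S p" "hd p = u" "last p = v" "set p \<subseteq> insert u (\<Union>S)"
      using walk_of_rtranclp H by metis
    then show "\<exists>p. walk S p \<and> set p \<subseteq> V \<and> hd p = u \<and> last p = v" using uv assms by blast
  qed
qed

lemma sep:
  assumes ac: "acyclic_graph T" and e: "{x,y} \<in> T" and xy: "x \<noteq> y"
  shows "\<not> (adj (T - {{x,y}}))\<^sup>*\<^sup>* x y"
proof
  assume "(adj (T - {{x,y}}))\<^sup>*\<^sup>* x y"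
  then obtain p where p: "p \<noteq> []" "p!0 = x" "p!(length p - 1) = y" "distinct p"
      "\<forall>i<length p - 1. adj (T - {{x,y}}) (p!i) (p!Suc i)" using rtranclp_dpath by metis
  have l2: "length p \<ge> 2"
  proof (rule ccontr)
    assume "\<not> length p \<ge> 2"
    then have "length p = 1" using p(1) by (cases p) (auto simp: not_le)
    then show False using p xy by simp
  qed
  have l3: "length p \<ge> 3"
  proof (rule ccontr)
    assume "\<not> length p \<ge> 3"
    then have "length p = 2" using l2 by simp
    then have "adj (T - {{x,y}}) x y" using p(2,3,5) by (metis One_nat_def diff_Suc_1 lessI numeral_2_eq_2 zero_less_Suc)
    then show False by (simp add: adj_def)
  qed
  have "walk T p" using p(1,5) by (auto simp: walk_def adj_def)
  moreover have "{last p, hd p} \<in> T" using p e by (simp add: hd_conv_nth last_conv_nth insert_commute)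
  ultimately have "is_cycle T p" using l3 p(4) by (simp add: is_cycle_def)
  then show False using ac by (auto simp: acyclic_graph_def)
qed

lemma rt_mono_rt:
  assumes "\<And>u v. r u v \<Longrightarrow> s\<^sup>*\<^sup>* u v" and "r\<^sup>*\<^sup>* x y"
  shows "s\<^sup>*\<^sup>* x y"
  using assms(2)
proof (induction rule: rtranclp_induct)
  case base then show ?case by simp
next
  case (step y z) then show ?case using assms(1) rtranclp_trans by metis
qed

lemma spanning_tree_exists:
  assumes fin: "finite E" and sub: "\<Union>E \<subseteq> V" and con: "connected_graph V E"
  shows "\<exists>T. spanning_tree V E T"
proof -
  obtain T where T: "T \<subseteq> E \<and> connected_graph V T"
    and mn: "\<forall>T'. T' \<subseteq> E \<and> connected_graph V T' \<longrightarrow> card T \<le> card T'"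
    using ex_has_least_nat[of "\<lambda>T. T \<subseteq> E \<and> connected_graph V T" E card] con by blast
  have finT: "finite T" using T fin finite_subset by blast
  have subT: "\<Union>T \<subseteq> V" using T sub by blast
  have "acyclic_graph T"
  proof (rule ccontr)
    assume "\<not> acyclic_graph T"
    then obtain c where c: "is_cycle T c" by (auto simp: acyclic_graph_def)
    define L where "L = length c"
    have L3: "L \<ge> 3" and dc: "distinct c" and wc: "walk T c" and eT: "{last c, hd c} \<in> T"
      using c by (auto simp: is_cycle_def L_def)
    have cne: "c \<noteq> []" using L3 L_def by auto
    define e where "e = {c!(L-1), c!0}"
    have eT': "e \<in> T" using eT cne by (simp add: e_def L_def hd_conv_nth last_conv_nth)
    define T' where "T' = T - {e}"
    have card_lt: "card T' < card T" unfolding T'_def by (rule card_Diff1_less[OF finT eT'])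
    have chain: "k < L \<Longrightarrow> (adj T')\<^sup>*\<^sup>* (c!0) (c!k)" for k
    proof (induction k)
      case 0 then show ?case by simp
    next
      case (Suc k)
      have ek: "{c!k, c!Suc k} \<in> T" using wc Suc.prems by (auto simp: walk_def L_def)
      have "{c!k, c!Suc k} \<noteq> e"
      proof
        assume "{c!k, c!Suc k} = e"
        then have "(c!k = c!(L-1) \<and> c!Suc k = c!0) \<or> (c!k = c!0 \<and> c!Suc k = c!(L-1))"
          by (simp add: e_def doubleton_eq_iff)
        then show False
        proof
          assume "c!k = c!(L-1) \<and> c!Suc k = c!0"
          then have "k = L - 1" using nth_eq_iff_index_eq[OF dc, of k "L-1"] Suc.prems L3
            by (simp add: L_def)
          then show False using Suc.prems by simp
        next
          assume H: "c!k = c!0 \<and> c!Suc k = c!(L-1)"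
          then have "k = 0" using nth_eq_iff_index_eq[OF dc, of k 0] Suc.prems L3 cne
            by (simp add: L_def)
          moreover have "Suc k = L - 1" using H nth_eq_iff_index_eq[OF dc, of "Suc k" "L-1"] Suc.prems L3
            by (simp add: L_def)
          ultimately show False using L3 by simp
        qed
      qed
      then have "adj T' (c!k) (c!Suc k)" using ek by (simp add: adj_def T'_def)
      then show ?case using Suc rtranclp.rtrancl_into_rtrancl by (metis Suc_lessD)
    qed
    have ba: "(adj T')\<^sup>*\<^sup>* (c!0) (c!(L-1))" using chain L3 by simp
    have ab: "(adj T')\<^sup>*\<^sup>* (c!(L-1)) (c!0)" using adj_rtranclp_sym[OF ba] .
    have step: "(adj T')\<^sup>*\<^sup>* u v" if "adj T u v" for u v
    proof (cases "{u,v} = e")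
      case True
      then have "(u = c!(L-1) \<and> v = c!0) \<or> (u = c!0 \<and> v = c!(L-1))"
        by (simp add: e_def doubleton_eq_iff)
      then show ?thesis using ab ba by blast
    next
      case False
      then have "adj T' u v" using that by (simp add: adj_def T'_def)
      then show ?thesis by simp
    qed
    have "connected_graph V T'"
    proof -
      have "\<Union>T' \<subseteq> V" using subT T'_def by blast
      moreover have "\<forall>u\<in>V. \<forall>v\<in>V. (adj T')\<^sup>*\<^sup>* u v"
      proof (intro ballI)
        fix u v assume "u \<in> V" "v \<in> V"
        then have "(adj T)\<^sup>*\<^sup>* u v" using T connected_iff_rt[OF subT] by blast
        then show "(adj T')\<^sup>*\<^sup>* u v" using rt_mono_rt[of "adj T" "adj T'"] step by blast
      qed
      ultimately show ?thesis using connected_iff_rt by blast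
    qed
    moreover have "T' \<subseteq> E" using T T'_def by blast
    ultimately have "card T \<le> card T'" using mn by blast
    then show False using card_lt by simp
  qed
  then show ?thesis using T by (auto simp: spanning_tree_def)
qed

lemma cross_index:
  assumes "P (f 0)" "\<not> P (f N)"
  shows "\<exists>k<N. P (f k) \<and> \<not> P (f (Suc k))"
  using assms(2)
proof (induction N)
  case 0 then show ?case using assms(1) by simp
next
  case (Suc N)
  then show ?case by (cases "P (f N)") (auto intro: less_SucI)
qed

definition lip :: "'a set set \<Rightarrow> ('a \<Rightarrow> int) \<Rightarrow> bool" where
  "lip E h \<longleftrightarrow> (\<forall>u v. {u,v} \<in> E \<longrightarrow> \<bar>h u - h v\<bar> \<le> 1)"

lemma lip_path:
  assumes "\<forall>k<N. \<bar>h (f k) - h (f (Suc k))\<bar> \<le> (1::int)" "i \<le> j" "j \<le> N"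
  shows "\<bar>h (f j) - h (f i)\<bar> \<le> int (j - i)"
  using assms(2,3)
proof (induction j)
  case 0 then show ?case by simp
next
  case (Suc j)
  show ?case
  proof (cases "i = Suc j")
    case True then show ?thesis by simp
  next
    case False
    then have "i \<le> j" using Suc.prems by simp
    then have "\<bar>h (f j) - h (f i)\<bar> \<le> int (j - i)" using Suc by simp
    moreover have "\<bar>h (f j) - h (f (Suc j))\<bar> \<le> 1" using assms(1) Suc.prems by simp
    ultimately show ?thesis using \<open>i \<le> j\<close> by (simp add: of_nat_diff)
  qed
qed

lemma edge_in_V:
  assumes "\<Union>E \<subseteq> V" "{a,b} \<in> E" shows "a \<in> V" "b \<in> V"
  using assms by blast+

lemma gdist_walk:
  assumes "connected_graph V T" "a \<in> V" "b \<in> V"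
  shows "\<exists>W. walk T W \<and> hd W = a \<and> last W = b \<and> length W = Suc (gdist T a b)"
proof -
  obtain p where p: "walk T p" "hd p = a" "last p = b"
    using assms unfolding connected_graph_def by blast
  have "p \<noteq> []" using p by (simp add: walk_def)
  then have "\<exists>k. \<exists>p. walk T p \<and> hd p = a \<and> last p = b \<and> length p = Suc k"
    using p by (intro exI[of _ "length p - 1"]) (auto intro!: exI[of _ p])
  then show ?thesis unfolding gdist_def by (rule LeastI_ex)
qed

lemma finite_gd_set:
  assumes "finite V" "\<Union>E \<subseteq> V"
  shows "finite {gdist T u v | u v. {u,v} \<in> E}"
proof -
  have "finite (\<Union>E)" using assms finite_subset by blast
  then have "finite ((\<lambda>(u,v). gdist T u v) ` (\<Union>E \<times> \<Union>E))" by simp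
  moreover have "{gdist T u v | u v. {u,v} \<in> E} \<subseteq> (\<lambda>(u,v). gdist T u v) ` (\<Union>E \<times> \<Union>E)"
    by force
  ultimately show ?thesis using finite_subset by blast
qed

lemma cross_bound:
  fixes h :: "'a \<Rightarrow> int"
  assumes ST: "spanning_tree V E T" and sub: "\<Union>E \<subseteq> V" and finV: "finite V"
    and e: "{x,y} \<in> T" and nxy: "\<not> (adj (T-{{x,y}}))\<^sup>*\<^sup>* x y"
    and Rp: "(adj (T-{{x,y}}))\<^sup>*\<^sup>* x p" and Rq: "(adj (T-{{x,y}}))\<^sup>*\<^sup>* y q"
    and fE: "\<forall>k<N. {f k, f (Suc k)} \<in> E" and f0: "f 0 = p" and fN: "f N = q"
    and lh: "lip E h" and hle: "\<forall>k\<le>N. h (f k) \<le> 0"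
  shows "2 * h y \<le> int (Max {gdist T u v | u v. {u,v} \<in> E})"
proof -
  define R where "R = (adj (T-{{x,y}}))\<^sup>*\<^sup>* x"
  have "R (f 0)" using Rp f0 R_def by simp
  moreover have "\<not> R (f N)"
  proof
    assume "R (f N)"
    then have "(adj (T-{{x,y}}))\<^sup>*\<^sup>* x q" using fN R_def by simp
    moreover have "(adj (T-{{x,y}}))\<^sup>*\<^sup>* q y" using adj_rtranclp_sym[OF Rq] .
    ultimately show False using nxy by (meson rtranclp_trans)
  qed
  ultimately obtain k where k: "k < N" "R (f k)" "\<not> R (f (Suc k))"
    using cross_index[of R f N] by blast
  define a where "a = f k"
  define b where "b = f (Suc k)"
  have abE: "{a,b} \<in> E" using fE k a_def b_def by simp
  have ha: "h a \<le> 0" "h b \<le> 0" using hle k a_def b_def by auto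
  have TE: "T \<subseteq> E" and conT: "connected_graph V T" using ST by (auto simp: spanning_tree_def)
  obtain W where W: "walk T W" "hd W = a" "last W = b" "length W = Suc (gdist T a b)"
    using gdist_walk[OF conT edge_in_V[OF sub abE]] by blast
  define D where "D = gdist T a b"
  have Wne: "W \<noteq> []" using W(1) by (simp add: walk_def)
  have W0: "W!0 = a" using W(2) Wne by (simp add: hd_conv_nth)
  have WD: "W!D = b" using W(3,4) Wne D_def by (simp add: last_conv_nth)
  have WT: "\<forall>i<D. {W!i, W!Suc i} \<in> T" using W D_def by (auto simp: walk_def)
  have "R (W!0)" using W0 k a_def by simp
  moreover have "\<not> R (W!D)" using WD k b_def by simp
  ultimately obtain i where i: "i < D" "R (W!i)" "\<not> R (W!Suc i)"
    using cross_index[of R "(!) W" D] by blast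
  have "{W!i, W!Suc i} = {x,y}"
  proof (rule ccontr)
    assume "{W!i, W!Suc i} \<noteq> {x,y}"
    then have "adj (T-{{x,y}}) (W!i) (W!Suc i)" using WT i by (simp add: adj_def)
    then show False using i R_def by (meson rtranclp.rtrancl_into_rtrancl)
  qed
  then obtain l where l: "l \<le> D" "W!l = y"
    using i by (metis Suc_leI doubleton_eq_iff less_imp_le_nat)
  have lW: "\<forall>k<D. \<bar>h (W!k) - h (W!Suc k)\<bar> \<le> 1" using WT TE lh by (auto simp: lip_def)
  have "\<bar>h (W!l) - h (W!0)\<bar> \<le> int (l - 0)" using lip_path[where f="(!) W" and h=h, OF lW, of 0 l] l by simp
  moreover have "\<bar>h (W!D) - h (W!l)\<bar> \<le> int (D - l)" using lip_path[where f="(!) W" and h=h, OF lW, of l D] l by simp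
  ultimately have "2 * h y \<le> int D" using l W0 WD ha by (simp add: of_nat_diff)
  moreover have "D \<le> Max {gdist T u v | u v. {u,v} \<in> E}"
    using finite_gd_set[OF finV sub, of T] abE D_def by (intro Max_ge) blast+
  ultimately show ?thesis by linarith
qed

lemma select_edge:
  fixes g :: "'a \<Rightarrow> int"
  assumes ST: "spanning_tree V E T" and sub: "\<Union>E \<subseteq> V"
    and pq: "p \<in> V" "q \<in> V" and lg: "lip E g" and gp: "g p < K" and gq: "K \<le> g q"
  shows "\<exists>x y. {x,y} \<in> T \<and> y \<in> V \<and> g y = K \<and> \<not> (adj (T-{{x,y}}))\<^sup>*\<^sup>* x y \<and>
           (adj (T-{{x,y}}))\<^sup>*\<^sup>* x p \<and> (adj (T-{{x,y}}))\<^sup>*\<^sup>* y q"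
proof -
  have TE: "T \<subseteq> E" and conT: "connected_graph V T" and ac: "acyclic_graph T"
    using ST by (auto simp: spanning_tree_def)
  have subT: "\<Union>T \<subseteq> V" using TE sub by blast
  have "(adj T)\<^sup>*\<^sup>* p q" using conT connected_iff_rt[OF subT] pq by blast
  then obtain W where W: "W \<noteq> []" "W!0 = p" "W!(length W - 1) = q" "distinct W"
      "\<forall>i<length W - 1. adj T (W!i) (W!Suc i)" using rtranclp_dpath by metis
  define L where "L = length W - 1"
  have WT: "\<forall>i<L. {W!i, W!Suc i} \<in> T" using W(5) L_def by (simp add: adj_def)
  have "g (W!0) < K" using W gp by simp
  moreover have "\<not> g (W!L) < K" using W gq L_def by simp
  ultimately obtain j where j: "j < L" "g (W!j) < K" "\<not> g (W!Suc j) < K"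
    using cross_index[of "\<lambda>z. g z < K" "(!) W" L] by blast
  define x where "x = W!j"
  define y where "y = W!Suc j"
  have exy: "{x,y} \<in> T" using WT j x_def y_def by simp
  have "\<bar>g x - g y\<bar> \<le> 1" using exy TE lg by (auto simp: lip_def)
  moreover have "g x < K" "\<not> g y < K" using j x_def y_def by simp_all
  ultimately have gy: "g y = K" by linarith
  have yV: "y \<in> V" using exy subT by blast
  have xy: "x \<noteq> y" using W(4) j x_def y_def L_def by (simp add: nth_eq_iff_index_eq)
  have nxy: "\<not> (adj (T-{{x,y}}))\<^sup>*\<^sup>* x y" using sep[OF ac exy xy] .
  have dis: "W!a = W!b \<longleftrightarrow> a = b" if "a \<le> L" "b \<le> L" for a b
  proof -
    have lw: "0 < length W" using W(1) by simp
    have "a < length W" using that L_def lw by linarith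
    moreover have "b < length W" using that L_def lw by linarith
    ultimately show ?thesis using nth_eq_iff_index_eq[OF W(4)] by blast
  qed
  have bk: "i \<le> j \<Longrightarrow> (adj (T-{{x,y}}))\<^sup>*\<^sup>* (W!0) (W!i)" for i
  proof (induction i)
    case 0 then show ?case by simp
  next
    case (Suc i)
    have "{W!i, W!Suc i} \<noteq> {x,y}"
    proof
      assume "{W!i, W!Suc i} = {x,y}"
      then have "W!i = W!j \<or> W!i = W!Suc j" using x_def y_def by (auto simp: doubleton_eq_iff)
      then show False using dis Suc.prems j by auto
    qed
    then have "adj (T-{{x,y}}) (W!i) (W!Suc i)" using WT Suc.prems j by (simp add: adj_def)
    then show ?case using Suc by (meson Suc_leD rtranclp.rtrancl_into_rtrancl)
  qed
  have "(adj (T-{{x,y}}))\<^sup>*\<^sup>* p x" using bk[of j] W(2) x_def by simp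
  then have Rp: "(adj (T-{{x,y}}))\<^sup>*\<^sup>* x p" by (rule adj_rtranclp_sym)
  have fwd: "Suc j + i \<le> L \<Longrightarrow> (adj (T-{{x,y}}))\<^sup>*\<^sup>* (W!Suc j) (W!(Suc j + i))" for i
  proof (induction i)
    case 0 then show ?case by simp
  next
    case (Suc i)
    have "{W!(Suc j + i), W!Suc (Suc j + i)} \<noteq> {x,y}"
    proof
      assume "{W!(Suc j + i), W!Suc (Suc j + i)} = {x,y}"
      then have "W!Suc (Suc j + i) = W!j \<or> W!Suc (Suc j + i) = W!Suc j"
        using x_def y_def by (auto simp: doubleton_eq_iff)
      then show False using dis Suc.prems j by auto
    qed
    then have "adj (T-{{x,y}}) (W!(Suc j + i)) (W!Suc (Suc j + i))" using WT Suc.prems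
      by (simp add: adj_def)
    then show ?case using Suc by (metis Suc_leD add_Suc_right rtranclp.rtrancl_into_rtrancl)
  qed
  have "(adj (T-{{x,y}}))\<^sup>*\<^sup>* y (W!L)" using fwd[of "L - Suc j"] j y_def by simp
  then have Rq: "(adj (T-{{x,y}}))\<^sup>*\<^sup>* y q" using W(3) L_def by simp
  show ?thesis using exy yV gy nxy Rp Rq by blast
qed

lemma generic_bound:
  fixes g h1 h2 :: "'a \<Rightarrow> int" and B :: int
  assumes ST: "spanning_tree V E T" and sub: "\<Union>E \<subseteq> V" and finV: "finite V"
    and pq: "p \<in> V" "q \<in> V" and lg: "lip E g" and gp: "g p < K" and gq: "K \<le> g q"
    and l1: "lip E h1" and l2: "lip E h2"
    and f1E: "\<forall>k<N1. {f1 k, f1 (Suc k)} \<in> E" and f10: "f1 0 = p" and f1N: "f1 N1 = q"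
    and h1le: "\<forall>k\<le>N1. h1 (f1 k) \<le> 0"
    and f2E: "\<forall>k<N2. {f2 k, f2 (Suc k)} \<in> E" and f20: "f2 0 = p" and f2N: "f2 N2 = q"
    and h2le: "\<forall>k\<le>N2. h2 (f2 k) \<le> 0"
    and bnd: "\<forall>y\<in>V. g y = K \<longrightarrow> B \<le> h1 y + h2 y"
  shows "B \<le> int (Max {gdist T u v | u v. {u,v} \<in> E})"
proof -
  obtain x y where xy: "{x,y} \<in> T" "y \<in> V" "g y = K" "\<not> (adj (T-{{x,y}}))\<^sup>*\<^sup>* x y"
     "(adj (T-{{x,y}}))\<^sup>*\<^sup>* x p" "(adj (T-{{x,y}}))\<^sup>*\<^sup>* y q"
    using select_edge[OF ST sub pq lg gp gq] by blast
  have "2 * h1 y \<le> int (Max {gdist T u v | u v. {u,v} \<in> E})"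
    using cross_bound[OF ST sub finV xy(1,4,5,6) f1E f10 f1N l1 h1le] .
  moreover have "2 * h2 y \<le> int (Max {gdist T u v | u v. {u,v} \<in> E})"
    using cross_bound[OF ST sub finV xy(1,4,5,6) f2E f20 f2N l2 h2le] .
  moreover have "B \<le> h1 y + h2 y" using bnd xy by blast
  ultimately show ?thesis by linarith
qed

lemma stretch_bound:
  assumes finV: "finite V" and sub: "\<Union>E \<subseteq> V" and con: "connected_graph V E"
    and H: "\<And>T. spanning_tree V E T \<Longrightarrow> B \<le> Max {gdist T u v | u v. {u,v} \<in> E}"
  shows "B \<le> stretch V E"
proof -
  have "E \<subseteq> Pow V" using sub by blast
  then have finE: "finite E" using finV by (simp add: finite_subset)
  have "{T. spanning_tree V E T} \<subseteq> Pow E" by (auto simp: spanning_tree_def)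
  then have fin: "finite {T. spanning_tree V E T}" using finE finite_subset by blast
  have ne: "{T. spanning_tree V E T} \<noteq> {}" using spanning_tree_exists[OF finE sub con] by blast
  show ?thesis unfolding stretch_def using fin ne H by (simp add: Min_ge_iff)
qed



lemma grid_edgeI:
  assumes "(a,b) \<in> grid_V n" "(c,d) \<in> grid_V n" "\<bar>a - c\<bar> + \<bar>b - d\<bar> = 1"
  shows "{(a,b),(c,d)} \<in> grid_E n"
  using assms unfolding grid_E_def by blast

lemma grid_edgeD:
  assumes "{u,v} \<in> grid_E n"
  shows "u \<in> grid_V n \<and> v \<in> grid_V n \<and> \<bar>fst u - fst v\<bar> + \<bar>snd u - snd v\<bar> = 1"
proof -
  obtain a b c d where H: "{u,v} = {(a,b),(c,d)}" "(a,b) \<in> grid_V n" "(c,d) \<in> grid_V n"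
    "\<bar>a - c\<bar> + \<bar>b - d\<bar> = 1" using assms unfolding grid_E_def by blast
  then have "(u = (a,b) \<and> v = (c,d)) \<or> (u = (c,d) \<and> v = (a,b))" by (simp add: doubleton_eq_iff)
  then show ?thesis using H by (auto simp: abs_minus_commute)
qed

lemma grid_sub: "\<Union>(grid_E n) \<subseteq> grid_V n"
proof
  fix w assume "w \<in> \<Union>(grid_E n)"
  then obtain a b c d where "w \<in> {(a,b),(c,d)}" "(a,b) \<in> grid_V n" "(c,d) \<in> grid_V n"
    unfolding grid_E_def by blast
  then show "w \<in> grid_V n" by blast
qed

lemma grid_fin: "finite (grid_V n)"
  unfolding grid_V_def by simp

lemma grid_lip:
  assumes "\<And>a b c d. (a,b) \<in> grid_V n \<Longrightarrow> (c,d) \<in> grid_V n \<Longrightarrow> \<bar>a - c\<bar> + \<bar>b - d\<bar> = 1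
      \<Longrightarrow> \<bar>h (a,b) - h (c,d)\<bar> \<le> 1"
  shows "lip (grid_E n) h"
  unfolding lip_def
proof (intro allI impI)
  fix u v assume "{u,v} \<in> grid_E n"
  then show "\<bar>h u - h v\<bar> \<le> 1" using grid_edgeD[of u v n] assms[of "fst u" "snd u" "fst v" "snd v"]
    by simp
qed

lemma grid_to_origin:
  "\<forall>a b. (a,b) \<in> grid_V n \<and> nat (a + b - 2) = k \<longrightarrow> (adj (grid_E n))\<^sup>*\<^sup>* (a,b) (1,1)"
proof (induction k)
  case 0
  show ?case
  proof (intro allI impI)
    fix a b assume "(a,b) \<in> grid_V n \<and> nat (a + b - 2) = 0"
    then have "a = 1 \<and> b = 1" by (auto simp: grid_V_def)
    then show "(adj (grid_E n))\<^sup>*\<^sup>* (a,b) (1,1)" by simp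
  qed
next
  case (Suc k)
  show ?case
  proof (intro allI impI)
    fix a b assume H: "(a,b) \<in> grid_V n \<and> nat (a + b - 2) = Suc k"
    show "(adj (grid_E n))\<^sup>*\<^sup>* (a,b) (1,1)"
    proof (cases "a > 1")
      case True
      have V: "(a-1,b) \<in> grid_V n" using H True by (auto simp: grid_V_def)
      have "adj (grid_E n) (a,b) (a-1,b)" unfolding adj_def using H V by (intro grid_edgeI) auto
      moreover have "(adj (grid_E n))\<^sup>*\<^sup>* (a-1,b) (1,1)" using Suc.IH V H by force
      ultimately show ?thesis by (rule converse_rtranclp_into_rtranclp)
    next
      case False
      then have a1: "a = 1" using H by (auto simp: grid_V_def)
      then have b: "b > 1" using H by auto
      have V: "(a,b-1) \<in> grid_V n" using H b by (auto simp: grid_V_def)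
      have "adj (grid_E n) (a,b) (a,b-1)" unfolding adj_def using H V by (intro grid_edgeI) auto
      moreover have "(adj (grid_E n))\<^sup>*\<^sup>* (a,b-1) (1,1)" using Suc.IH V H by force
      ultimately show ?thesis by (rule converse_rtranclp_into_rtranclp)
    qed
  qed
qed

lemma grid_conn: "connected_graph (grid_V n) (grid_E n)"
  unfolding connected_iff_rt[OF grid_sub]
proof (intro ballI)
  fix u v assume "u \<in> grid_V n" "v \<in> grid_V n"
  then have "(adj (grid_E n))\<^sup>*\<^sup>* u (1,1)" "(adj (grid_E n))\<^sup>*\<^sup>* v (1,1)"
    using grid_to_origin by (metis prod.collapse)+
  then show "(adj (grid_E n))\<^sup>*\<^sup>* u v" using adj_rtranclp_sym rtranclp_trans by metis
qed

lemma grid_bound: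
  assumes n2: "n \<ge> 2"
  shows "n - 1 \<le> stretch (grid_V n) (grid_E n)"
proof (rule stretch_bound[OF grid_fin grid_sub grid_conn])
  fix T assume ST: "spanning_tree (grid_V n) (grid_E n) T"
  define N where "N = int n"
  define g :: "int \<times> int \<Rightarrow> int" where "g = (\<lambda>(a,b). a + b)"
  define h1 :: "int \<times> int \<Rightarrow> int" where "h1 = (\<lambda>(a,b). min (b - 1) (N - a))"
  define h2 :: "int \<times> int \<Rightarrow> int" where "h2 = (\<lambda>(a,b). min (a - 1) (N - b))"
  define f1 :: "nat \<Rightarrow> int \<times> int" where "f1 = (\<lambda>k. (min (1 + int k) N, max 1 (int k - N + 2)))"
  define f2 :: "nat \<Rightarrow> int \<times> int" where "f2 = (\<lambda>k. (max 1 (int k - N + 2), min (1 + int k) N))"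
  have N2: "N \<ge> 2" using n2 N_def by simp
  have pV: "(1,1) \<in> grid_V n" and qV: "(N,N) \<in> grid_V n" using N2 N_def by (auto simp: grid_V_def)
  have lg: "lip (grid_E n) g" by (rule grid_lip) (auto simp: g_def)
  have l1: "lip (grid_E n) h1" by (rule grid_lip) (auto simp: h1_def)
  have l2: "lip (grid_E n) h2" by (rule grid_lip) (auto simp: h2_def)
  have f1E: "\<forall>k<2*n-2. {f1 k, f1 (Suc k)} \<in> grid_E n"
  proof (intro allI impI)
    fix k assume k: "k < 2*n-2"
    have "k + 3 \<le> 2 * n" using k n2 by arith
    then have "int k + 3 \<le> 2 * N" using N_def by linarith
    then show "{f1 k, f1 (Suc k)} \<in> grid_E n" unfolding f1_def using N2
      by (intro grid_edgeI) (auto simp: grid_V_def N_def)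
  qed
  have f2E: "\<forall>k<2*n-2. {f2 k, f2 (Suc k)} \<in> grid_E n"
  proof (intro allI impI)
    fix k assume k: "k < 2*n-2"
    have "k + 3 \<le> 2 * n" using k n2 by arith
    then have "int k + 3 \<le> 2 * N" using N_def by linarith
    then show "{f2 k, f2 (Suc k)} \<in> grid_E n" unfolding f2_def using N2
      by (intro grid_edgeI) (auto simp: grid_V_def N_def)
  qed
  have f1e: "f1 0 = (1,1)" "f1 (2*n-2) = (N,N)" and f2e: "f2 0 = (1,1)" "f2 (2*n-2) = (N,N)"
    using N2 N_def n2 by (auto simp: f1_def f2_def of_nat_diff)
  have h1le: "\<forall>k\<le>2*n-2. h1 (f1 k) \<le> 0" by (auto simp: h1_def f1_def)
  have h2le: "\<forall>k\<le>2*n-2. h2 (f2 k) \<le> 0" by (auto simp: h2_def f2_def)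
  have bnd: "\<forall>y\<in>grid_V n. g y = N + 1 \<longrightarrow> N - 1 \<le> h1 y + h2 y"
    by (auto simp: g_def h1_def h2_def)
  have gp: "g (1,1) < N + 1" and gq: "N + 1 \<le> g (N,N)" using N2 by (auto simp: g_def)
  have "N - 1 \<le> int (Max {gdist T u v | u v. {u,v} \<in> grid_E n})"
    using generic_bound[OF ST grid_sub grid_fin pV qV lg gp gq l1 l2 f1E f1e h1le f2E f2e h2le bnd] .
  then show "n - 1 \<le> Max {gdist T u v | u v. {u,v} \<in> grid_E n}" using N_def n2 by linarith
qed



lemma tri_edgeI:
  assumes "(a,b) \<in> tri_V n" "(c,d) \<in> tri_V n"
    "(c - a, d - b) \<in> {(1, 0), (-1, 0), (0, 1), (0, -1), (1, -1), (-1, 1)}"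
  shows "{(a,b),(c,d)} \<in> tri_E n"
  using assms unfolding tri_E_def by blast

lemma tri_edgeD:
  assumes "{u,v} \<in> tri_E n"
  shows "u \<in> tri_V n \<and> v \<in> tri_V n \<and> \<bar>fst u - fst v\<bar> \<le> 1 \<and> \<bar>snd u - snd v\<bar> \<le> 1 \<and>
         \<bar>fst u + snd u - fst v - snd v\<bar> \<le> 1"
proof -
  obtain a b c d where H: "{u,v} = {(a,b),(c,d)}" "(a,b) \<in> tri_V n" "(c,d) \<in> tri_V n"
    "(c - a, d - b) \<in> {(1, 0), (-1, 0), (0, 1), (0, -1), (1, -1), (-1, 1)}"
    using assms unfolding tri_E_def by blast
  have D: "\<bar>a - c\<bar> \<le> 1 \<and> \<bar>b - d\<bar> \<le> 1 \<and> \<bar>a + b - c - d\<bar> \<le> 1" using H(4) by auto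
  have "(u = (a,b) \<and> v = (c,d)) \<or> (u = (c,d) \<and> v = (a,b))" using H(1) by (simp add: doubleton_eq_iff)
  then show ?thesis using H(2,3) D by (auto simp: abs_minus_commute)
qed

lemma tri_sub: "\<Union>(tri_E n) \<subseteq> tri_V n"
proof
  fix w assume "w \<in> \<Union>(tri_E n)"
  then obtain a b c d where "w \<in> {(a,b),(c,d)}" "(a,b) \<in> tri_V n" "(c,d) \<in> tri_V n"
    unfolding tri_E_def by blast
  then show "w \<in> tri_V n" by blast
qed

lemma tri_fin: "finite (tri_V n)"
proof -
  have "tri_V n \<subseteq> {0..int n} \<times> {0..int n}" by (auto simp: tri_V_def)
  then show ?thesis using finite_subset by blast
qed

lemma tri_lip:
  assumes "\<And>a b c d. \<bar>a - c\<bar> \<le> 1 \<Longrightarrow> \<bar>b - d\<bar> \<le> 1 \<Longrightarrow> \<bar>a + b - c - d\<bar> \<le> 1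
      \<Longrightarrow> \<bar>h (a,b) - h (c,d)\<bar> \<le> 1"
  shows "lip (tri_E n) h"
  unfolding lip_def
proof (intro allI impI)
  fix u v assume "{u,v} \<in> tri_E n"
  then show "\<bar>h u - h v\<bar> \<le> 1" using tri_edgeD[of u v n] assms[of "fst u" "fst v" "snd u" "snd v"]
    by simp
qed

lemma tri_to_origin:
  "\<forall>a b. (a,b) \<in> tri_V n \<and> nat (a + b) = k \<longrightarrow> (adj (tri_E n))\<^sup>*\<^sup>* (a,b) (0,0)"
proof (induction k)
  case 0
  show ?case
  proof (intro allI impI)
    fix a b assume "(a,b) \<in> tri_V n \<and> nat (a + b) = 0"
    then have "a = 0 \<and> b = 0" by (auto simp: tri_V_def)
    then show "(adj (tri_E n))\<^sup>*\<^sup>* (a,b) (0,0)" by simp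
  qed
next
  case (Suc k)
  show ?case
  proof (intro allI impI)
    fix a b assume H: "(a,b) \<in> tri_V n \<and> nat (a + b) = Suc k"
    show "(adj (tri_E n))\<^sup>*\<^sup>* (a,b) (0,0)"
    proof (cases "a > 0")
      case True
      have V: "(a-1,b) \<in> tri_V n" using H True by (auto simp: tri_V_def)
      have "adj (tri_E n) (a,b) (a-1,b)" unfolding adj_def using H V by (intro tri_edgeI) auto
      moreover have "(adj (tri_E n))\<^sup>*\<^sup>* (a-1,b) (0,0)" using Suc.IH V H by force
      ultimately show ?thesis by (rule converse_rtranclp_into_rtranclp)
    next
      case False
      then have a1: "a = 0" using H by (auto simp: tri_V_def)
      then have b: "b > 0" using H by auto
      have V: "(a,b-1) \<in> tri_V n" using H b by (auto simp: tri_V_def)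
      have "adj (tri_E n) (a,b) (a,b-1)" unfolding adj_def using H V by (intro tri_edgeI) auto
      moreover have "(adj (tri_E n))\<^sup>*\<^sup>* (a,b-1) (0,0)" using Suc.IH V H by force
      ultimately show ?thesis by (rule converse_rtranclp_into_rtranclp)
    qed
  qed
qed

lemma tri_conn: "connected_graph (tri_V n) (tri_E n)"
  unfolding connected_iff_rt[OF tri_sub]
proof (intro ballI)
  fix u v assume "u \<in> tri_V n" "v \<in> tri_V n"
  then have "(adj (tri_E n))\<^sup>*\<^sup>* u (0,0)" "(adj (tri_E n))\<^sup>*\<^sup>* v (0,0)"
    using tri_to_origin by (metis prod.collapse)+
  then show "(adj (tri_E n))\<^sup>*\<^sup>* u v" using adj_rtranclp_sym rtranclp_trans by metis
qed

lemma tri_bound: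
  assumes n2: "n \<ge> 2"
  shows "(n - 1) div 2 \<le> stretch (tri_V n) (tri_E n)"
proof (cases "(n - 1) div 2 = 0")
  case True then show ?thesis by simp
next
  case False
  show ?thesis
  proof (rule stretch_bound[OF tri_fin tri_sub tri_conn])
  fix T assume ST: "spanning_tree (tri_V n) (tri_E n) T"
  define M where "M = int n - 1"
  define K where "K = int ((n - 1) div 2)"
  have K1: "K \<ge> 1" using False K_def by simp
  have "2 * ((n - 1) div 2) \<le> n - 1" by simp
  then have K2: "2 * K \<le> M" using K_def M_def n2 by linarith
  define g :: "int \<times> int \<Rightarrow> int" where "g = (\<lambda>(a,b). a)"
  define h1 :: "int \<times> int \<Rightarrow> int" where "h1 = (\<lambda>(a,b). b)"
  define h2 :: "int \<times> int \<Rightarrow> int" where "h2 = (\<lambda>(a,b). min a (M - a - b))"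
  define f1 :: "nat \<Rightarrow> int \<times> int" where "f1 = (\<lambda>k. (int k, 0))"
  define f2 :: "nat \<Rightarrow> int \<times> int" where
    "f2 = (\<lambda>k. (max 0 (int k - M), min (int k) M - max 0 (int k - M)))"
  have pV: "(0,0) \<in> tri_V n" and qV: "(M,0) \<in> tri_V n" using n2 M_def by (auto simp: tri_V_def)
  have lg: "lip (tri_E n) g" by (rule tri_lip) (auto simp: g_def)
  have l1: "lip (tri_E n) h1" by (rule tri_lip) (auto simp: h1_def)
  have l2: "lip (tri_E n) h2" by (rule tri_lip) (auto simp: h2_def)
  have f1E: "\<forall>k<n-1. {f1 k, f1 (Suc k)} \<in> tri_E n"
  proof (intro allI impI)
    fix k assume k: "k < n-1"
    then have "int k + 1 \<le> M" using M_def by linarith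
    then show "{f1 k, f1 (Suc k)} \<in> tri_E n" unfolding f1_def
      by (intro tri_edgeI) (auto simp: tri_V_def M_def)
  qed
  have f2E: "\<forall>k<2*n-2. {f2 k, f2 (Suc k)} \<in> tri_E n"
  proof (intro allI impI)
    fix k assume k: "k < 2*n-2"
    have "k + 3 \<le> 2 * n" using k n2 by arith
    then have kk: "int k + 1 \<le> 2 * M" using M_def by linarith
    show "{f2 k, f2 (Suc k)} \<in> tri_E n"
    proof (cases "int k < M")
      case True
      then show ?thesis unfolding f2_def using kk
        by (intro tri_edgeI) (auto simp: tri_V_def M_def)
    next
      case False
      then show ?thesis unfolding f2_def using kk
        by (intro tri_edgeI) (auto simp: tri_V_def M_def)
    qed
  qed
  have f1e: "f1 0 = (0,0)" "f1 (n-1) = (M,0)" using n2 M_def by (auto simp: f1_def of_nat_diff)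
  have f2e: "f2 0 = (0,0)" "f2 (2*n-2) = (M,0)" using n2 M_def by (auto simp: f2_def of_nat_diff)
  have h1le: "\<forall>k\<le>n-1. h1 (f1 k) \<le> 0" by (auto simp: h1_def f1_def)
  have h2le: "\<forall>k\<le>2*n-2. h2 (f2 k) \<le> 0" by (auto simp: h2_def f2_def)
  have bnd: "\<forall>y\<in>tri_V n. g y = K \<longrightarrow> K \<le> h1 y + h2 y"
    using K2 by (auto simp: g_def h1_def h2_def tri_V_def)
  have gp: "g (0,0) < K" and gq: "K \<le> g (M,0)" using K1 K2 by (auto simp: g_def)
  have "K \<le> int (Max {gdist T u v | u v. {u,v} \<in> tri_E n})"
    using generic_bound[OF ST tri_sub tri_fin pV qV lg gp gq l1 l2 f1E f1e h1le f2E f2e h2le bnd] .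
  then show "(n - 1) div 2 \<le> Max {gdist T u v | u v. {u,v} \<in> tri_E n}" using K_def by linarith
  qed
qed


theorem mainTheorem8:
  fixes n :: nat
  assumes "n \<ge> 2"
  shows "stretch (grid_V n) (grid_E n) \<ge> n - 1 \<and> stretch (tri_V n) (tri_E n) \<ge> (n - 1) div 2"
  using grid_bound[OF assms] tri_bound[OF assms] by simp

end
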